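(* Let $X$ be a finite $T_0$-space and let $x_i\in X$ be a beat point (up or down). Then $\det(X_M)=-\det\big((X\setminus\{x_i\})_M\big)$.
   Context: A finite $T_0$-space is identified with a finite poset via $x\le y$ iff $U_x\subseteq U_y$, where $U_x$ is the minimal open set containing $x$; subspaces carry the induced order. For a labelling $X=\{x_1,\dots,x_n\}$, $X_M=(x_{i,j})$ is the $n\times n$ matrix with $x_{i,j}=0$ if $x_i\le x_j$ and $x_{i,j}=1$ otherwise; its determinant does not depend on the labelling. A point $x$ is a down beat point if $\{y: y<x\}$ has a maximum, and an up beat point if $\{y:y>x\}$ has a minimum. *)

theory Defs
  imports "Jordan_Normal_Form.Determinant"
begin

text \<open>A finite T0-space is represented as a finite subset X of a partially ordered type;
  subspaces carry the induced (restricted) order.\<close>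

definition down_beat_point :: "'a::order set \<Rightarrow> 'a \<Rightarrow> bool" where
  "down_beat_point X x \<longleftrightarrow> x \<in> X \<and>
     (\<exists>m\<in>X. m < x \<and> (\<forall>y\<in>X. y < x \<longrightarrow> y \<le> m))"

definition up_beat_point :: "'a::order set \<Rightarrow> 'a \<Rightarrow> bool" where
  "up_beat_point X x \<longleftrightarrow> x \<in> X \<and>
     (\<exists>m\<in>X. x < m \<and> (\<forall>y\<in>X. x < y \<longrightarrow> m \<le> y))"

definition beat_point :: "'a::order set \<Rightarrow> 'a \<Rightarrow> bool" where
  "beat_point X x \<longleftrightarrow> down_beat_point X x \<or> up_beat_point X x"

definition poset_matrix :: "(nat \<Rightarrow> 'a::order) \<Rightarrow> nat \<Rightarrow> int mat" where
  "poset_matrix f n = mat n n (\<lambda>(i, j). if f i \<le> f j then 0 else 1)"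

end

theory Submission
  imports Defs
begin

lemma poset_matrix_carrier[simp]: "poset_matrix f n \<in> carrier_mat n n"
  unfolding poset_matrix_def by auto

lemma poset_matrix_dim[simp]: "dim_row (poset_matrix f n) = n" "dim_col (poset_matrix f n) = n"
  unfolding poset_matrix_def by auto

lemma poset_matrix_index[simp]: "i < n \<Longrightarrow> j < n \<Longrightarrow>
  poset_matrix f n $$ (i,j) = (if f i \<le> f j then 0 else 1)"
  unfolding poset_matrix_def by auto

lemma labelling_invariant:
  assumes f: "bij_betw f {..<n} Y" and g: "bij_betw g {..<n} Y"
  shows "det (poset_matrix f n) = det (poset_matrix g n)"
proof -
  define p where "p = (\<lambda>i. if i < n then inv_into {..<n} g (f i) else i)"
  have "bij_betw (inv_into {..<n} g \<circ> f) {..<n} {..<n}"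
    using f g by (meson bij_betw_inv_into bij_betw_trans)
  then have "bij_betw p {..<n} {..<n}"
    by (rule bij_betw_cong[THEN iffD1, rotated]) (auto simp: p_def)
  then have p: "p permutes {0..<n}"
    by (intro bij_imp_permutes) (auto simp: p_def lessThan_atLeast0)
  have fg: "f i = g (p i)" if "i < n" for i
  proof -
    have "f i \<in> g ` {..<n}" using f g that by (auto simp: bij_betw_def)
    then show ?thesis using that by (simp add: p_def f_inv_into_f)
  qed
  have pn: "p i < n" if "i < n" for i
    using p that by (metis atLeastLessThan_iff permutes_in_image zero_le)
  define B where "B = poset_matrix g n"
  define C where "C = mat n n (\<lambda>(i,j). B $$ (p i, j))"
  define D where "D = mat n n (\<lambda>(i,j). (transpose_mat C) $$ (p i, j))"
  have B: "B \<in> carrier_mat n n" unfolding B_def by simp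
  have C: "C \<in> carrier_mat n n" unfolding C_def by simp
  have D: "D \<in> carrier_mat n n" unfolding D_def by simp
  have dC: "det C = signof p * det B" unfolding C_def by (rule det_permute_rows[OF B p])
  have dD: "det D = signof p * det (transpose_mat C)" unfolding D_def
    by (rule det_permute_rows[OF _ p]) (use C in auto)
  have eq: "poset_matrix f n = transpose_mat D"
    by (rule eq_matI) (use pn in \<open>auto simp: D_def C_def B_def fg\<close>)
  have "det (poset_matrix f n) = det D" unfolding eq by (rule det_transpose[OF D])
  also have "\<dots> = signof p * signof p * det B"
    unfolding dD det_transpose[OF C] dC by simp
  also have "signof p * signof p = (1::int)" by (simp add: sign_def)
  finally show ?thesis by (simp add: B_def)
qed

lemma det_delete_col:
  fixes A :: "int mat"
  assumes A: "A \<in> carrier_mat n n" and k: "k < n" and l: "l < n" and kl: "k \<noteq> l"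
    and d: "\<And>i. i < n \<Longrightarrow> A $$ (i,k) - A $$ (i,l) = (if i = k then -1 else 0)"
  shows "det A = - det (mat_delete A k k)"
proof -
  define B where "B = addcol (-1) k l A"
  have B: "B \<in> carrier_mat n n" using A by (simp add: B_def mat_addcol_def)
  have "det A = det B" unfolding B_def by (rule det_addcol[OF l kl A, symmetric])
  also have "\<dots> = (\<Sum>i<n. B $$ (i,k) * cofactor B i k)"
    by (rule laplace_expansion_column[OF B k])
  also have "\<dots> = (\<Sum>i<n. (if i = k then - cofactor B k k else 0))"
  proof (rule sum.cong[OF refl])
    fix i assume "i \<in> {..<n}"
    then have i: "i < n" by simp
    have "B $$ (i,k) = (if i = k then -1 else 0)"
      using d[OF i] A i k l by (auto simp: B_def mat_addcol_def)
    then show "B $$ (i,k) * cofactor B i k = (if i = k then - cofactor B k k else 0)" by simp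
  qed
  also have "\<dots> = - cofactor B k k" using k by simp
  also have "mat_delete B k k = mat_delete A k k"
    by (rule eq_matI) (use A k in \<open>auto simp: mat_delete_def B_def mat_addcol_def\<close>)
  then have "cofactor B k k = det (mat_delete A k k)" by (simp add: cofactor_def)
  finally show ?thesis by simp
qed

lemma det_delete_row:
  fixes A :: "int mat"
  assumes A: "A \<in> carrier_mat n n" and k: "k < n" and l: "l < n" and kl: "k \<noteq> l"
    and d: "\<And>j. j < n \<Longrightarrow> A $$ (k,j) - A $$ (l,j) = (if j = k then -1 else 0)"
  shows "det A = - det (mat_delete A k k)"
proof -
  have At: "transpose_mat A \<in> carrier_mat n n" using A by simp
  have "det A = det (transpose_mat A)" using det_transpose[OF A] by simp
  also have "\<dots> = - det (mat_delete (transpose_mat A) k k)"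
    by (rule det_delete_col[OF At k l kl]) (use A d k l in auto)
  also have "mat_delete (transpose_mat A) k k = transpose_mat (mat_delete A k k)"
    by (rule eq_matI) (use A in \<open>auto simp: mat_delete_def\<close>)
  also have "det \<dots> = det (mat_delete A k k)"
    by (rule det_transpose) (use A mat_delete_carrier in blast)
  finally show ?thesis .
qed


lemma insert_index_bij:
  assumes k: "k < n"
  shows "bij_betw (insert_index k) {..<n-1} ({..<n} - {k})"
proof -
  have "inj_on (insert_index k) {..<n-1}"
    by (auto simp: inj_on_def insert_index_def split: if_splits)
  moreover have "insert_index k ` {..<n-1} = {..<n} - {k}"
  proof
    show "insert_index k ` {..<n-1} \<subseteq> {..<n} - {k}"
      using k by (auto simp: insert_index_def)
    show "{..<n} - {k} \<subseteq> insert_index k ` {..<n-1}"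
    proof
      fix j assume j: "j \<in> {..<n} - {k}"
      show "j \<in> insert_index k ` {..<n-1}"
      proof (cases "j < k")
        case True
        then show ?thesis using k by (intro image_eqI[of _ _ j]) (auto simp: insert_index_def)
      next
        case False
        then show ?thesis using j by (intro image_eqI[of _ _ "j - 1"]) (auto simp: insert_index_def)
      qed
    qed
  qed
  ultimately show ?thesis by (simp add: bij_betw_def)
qed

theorem mainTheorem3:
  fixes X :: "'a::order set" and x :: 'a
    and f g :: "nat \<Rightarrow> 'a"
  assumes "finite X"
    and "beat_point X x"
    and "bij_betw f {..<card X} X"
    and "bij_betw g {..<card (X - {x})} (X - {x})"
  shows "det (poset_matrix f (card X)) = - det (poset_matrix g (card (X - {x})))"
proof -
  define n where "n = card X"
  have fb: "bij_betw f {..<n} X" using assms(3) by (simp add: n_def)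
  have xX: "x \<in> X" using assms(2) by (auto simp: beat_point_def down_beat_point_def up_beat_point_def)
  have cn: "card (X - {x}) = n - 1" using xX assms(1) by (simp add: n_def)
  define k where "k = inv_into {..<n} f x"
  have k: "k < n" "f k = x" using fb xX unfolding k_def
    by (auto simp: bij_betw_def inv_into_into f_inv_into_f)
  have fX: "f i \<in> X" if "i < n" for i using fb that by (auto simp: bij_betw_def)
  have finj: "f i = f j \<longleftrightarrow> i = j" if "i < n" "j < n" for i j
    using fb that by (auto simp: bij_betw_def inj_on_def)
  define A where "A = poset_matrix f n"
  have A: "A \<in> carrier_mat n n" by (simp add: A_def)
  obtain m l where ml: "m \<in> X" "l < n" "f l = m" "l \<noteq> k" and
    cases: "(m < x \<and> (\<forall>y\<in>X. y < x \<longrightarrow> y \<le> m)) \<or> (x < m \<and> (\<forall>y\<in>X. x < y \<longrightarrow> m \<le> y))"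
  proof -
    obtain m where m: "m \<in> X" and
      c: "(m < x \<and> (\<forall>y\<in>X. y < x \<longrightarrow> y \<le> m)) \<or> (x < m \<and> (\<forall>y\<in>X. x < y \<longrightarrow> m \<le> y))"
      using assms(2) by (auto simp: beat_point_def down_beat_point_def up_beat_point_def)
    define l where "l = inv_into {..<n} f m"
    have l: "l < n" "f l = m" using fb m unfolding l_def
      by (auto simp: bij_betw_def inv_into_into f_inv_into_f)
    have "l \<noteq> k" using l k c by auto
    then show ?thesis using that m l c by blast
  qed
  have del: "det A = - det (mat_delete A k k)"
    using cases
  proof
    assume c: "m < x \<and> (\<forall>y\<in>X. y < x \<longrightarrow> y \<le> m)"
    show ?thesis
    proof (rule det_delete_col[OF A k(1) ml(2) ml(4)[symmetric]])
      fix i assume i: "i < n"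
      show "A $$ (i, k) - A $$ (i, l) = (if i = k then - 1 else 0)"
      proof (cases "i = k")
        case True then show ?thesis using i k ml c by (auto simp: A_def)
      next
        case False
        then have "f i \<noteq> x" using finj[OF i k(1)] k by simp
        then have "f i \<le> x \<longleftrightarrow> f i \<le> m" using c fX[OF i] order.strict_trans2 by fastforce
        then show ?thesis using False i k ml by (auto simp: A_def)
      qed
    qed
  next
    assume c: "x < m \<and> (\<forall>y\<in>X. x < y \<longrightarrow> m \<le> y)"
    show ?thesis
    proof (rule det_delete_row[OF A k(1) ml(2) ml(4)[symmetric]])
      fix j assume j: "j < n"
      show "A $$ (k, j) - A $$ (l, j) = (if j = k then - 1 else 0)"
      proof (cases "j = k")
        case True then show ?thesis using j k ml c by (auto simp: A_def)
      next
        case False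
        then have "f j \<noteq> x" using finj[OF j k(1)] k by simp
        then have "x \<le> f j \<longleftrightarrow> m \<le> f j" using c fX[OF j] order.strict_trans1 by fastforce
        then show ?thesis using False j k ml by (auto simp: A_def)
      qed
    qed
  qed
  have md: "mat_delete A k k = poset_matrix (f \<circ> insert_index k) (n - 1)"
    by (rule eq_matI) (auto simp: A_def mat_delete_def insert_index_def)
  have "bij_betw (f \<circ> insert_index k) {..<n-1} (f ` ({..<n} - {k}))"
  proof (rule bij_betw_trans[OF insert_index_bij[OF k(1)]])
    show "bij_betw f ({..<n} - {k}) (f ` ({..<n} - {k}))"
      using fb by (auto simp: bij_betw_def intro: inj_on_subset)
  qed
  moreover have "f ` ({..<n} - {k}) = X - {x}"
    using fb k finj by (auto simp: bij_betw_def)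
  ultimately have hb: "bij_betw (f \<circ> insert_index k) {..<n-1} (X - {x})" by simp
  have gb: "bij_betw g {..<n-1} (X - {x})" using assms(4) cn by simp
  show ?thesis
    using del labelling_invariant[OF hb gb] unfolding md cn by (simp add: A_def n_def)
qed

end
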